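(* Let $\beta=\langle\beta_1,\beta_*,a\mapsto\tau_a\rangle:Y\to FY$ be an $F$-coalgebra in $\mathbf{Meas}$ (so $\beta_1,\beta_*:Y\to\mathbb I$ and $\tau_a:Y\to Y$ are measurable). The following are equivalent: (i) there exists an $F$-coalgebra morphism $[\![-]\!]$ from $(Y,\beta)$ to $(\mathbb DA^\infty,\Pi)$, i.e. a measurable map $[\![-]\!]:Y\to\mathbb DA^\infty$ with $\Pi\circ[\![-]\!]=F[\![-]\!]\circ\beta$; (ii) for all $y\in Y$, $\beta_1(y)=\beta_*(y)+\sum_{a\in A}\beta_1(\tau_a(y))$. Moreover, in this case the morphism in (i) is unique.
   Context: Work in $\mathbf{Meas}$. $\mathbb I=[0,1]$ with Borel $\sigma$-algebra; $A$ finite alphabet; $A^\infty=A^*\cup A^\omega$ (finite and infinite words, empty word $\varepsilon$) with $\sigma$-algebra $\Sigma_{A^\infty}$ generated by $S_\infty=\{\emptyset\}\cup\{\{w\}\mid w\in A^*\}\cup\{wA^\infty\mid w\in A^*\}$, where $wS=\{wv\mid v\in S\}$. $\mathbb DA^\infty$ is the set of sub-probability measures on $A^\infty$ with the $\sigma$-algebra generated by the maps $m\mapsto m(S)$, $S\in\Sigma_{A^\infty}$. The measure derivative of $m$ w.r.t. $a\in A$ is $m_a(S)=m(aS)$. $F$ is the functor $FX=\mathbb I\times\mathbb I\times X^A$ (product $\sigma$-algebra), $Ff=\mathrm{id}_{\mathbb I}\times\mathrm{id}_{\mathbb I}\times f^A$. $\Pi:\mathbb DA^\infty\to F\mathbb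 DA^\infty$ is $\Pi(m)=\langle m(A^\infty),\ m(\{\varepsilon\}),\ a\mapsto m_a\rangle$. *)

theory Defs
  imports "HOL-Probability.Probability" "HOL-Library.Stream"
begin

datatype 'a infword = FinW "'a list" | InfW "'a stream"

definition eps :: "'a infword" where "eps = FinW []"

fun app :: "'a list \<Rightarrow> 'a infword \<Rightarrow> 'a infword" where
  "app w (FinW v) = FinW (w @ v)"
| "app w (InfW s) = InfW (w @- s)"

definition prefix_set :: "'a list \<Rightarrow> 'a infword set \<Rightarrow> 'a infword set" where
  "prefix_set w S = app w ` S"

definition S_inf :: "'a infword set set" where
  "S_inf = {{}} \<union> {{FinW w} | w. True} \<union> {prefix_set w UNIV | w. True}"

definition AInf :: "'a infword measure" where
  "AInf = sigma UNIV S_inf"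

definition unitI :: "real measure" where
  "unitI = restrict_space borel {0..1}"

text \<open>f : Y \<rightarrow> \<D>A^\<infinity> is an F-coalgebra morphism from (Y, <b1, bs, a \<mapsto> tau a>) to (\<D>A^\<infinity>, \<Pi>):
  f is measurable and \<Pi> \<circ> f = Ff \<circ> \<beta>, i.e. componentwise
  f(y)(A^\<infinity>) = b1 y, f(y)({\<epsilon>}) = bs y and (f y)_a = f (tau a y),
  where the measure derivative is m_a(S) = m(aS).\<close>
definition coalg_morphism ::
  "'y measure \<Rightarrow> ('y \<Rightarrow> real) \<Rightarrow> ('y \<Rightarrow> real) \<Rightarrow> ('a \<Rightarrow> 'y \<Rightarrow> 'y)
   \<Rightarrow> ('y \<Rightarrow> 'a infword measure) \<Rightarrow> bool" where
  "coalg_morphism Y b1 bs tau f \<longleftrightarrow>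
     f \<in> measurable Y (subprob_algebra AInf) \<and>
     (\<forall>y\<in>space Y.
        emeasure (f y) (space AInf) = ennreal (b1 y) \<and>
        emeasure (f y) {eps} = ennreal (bs y) \<and>
        (\<forall>a. \<forall>S\<in>sets AInf. emeasure (f (tau a y)) S = emeasure (f y) (prefix_set [a] S)))"

end

theory Submission
  imports Defs
begin



lemma space_AInf[simp]: "space AInf = UNIV"
  unfolding AInf_def by (simp add: space_measure_of_conv)

lemma sets_AInf: "sets AInf = sigma_sets UNIV S_inf"
  unfolding AInf_def by (simp add: sets_measure_of_conv)

lemma S_inf_sets: "S_inf \<subseteq> sets AInf"
  unfolding sets_AInf by auto

lemma FinW_sets[measurable]: "{FinW w} \<in> sets AInf"
  using S_inf_sets unfolding S_inf_def by auto

lemma prefix_set_sets[measurable]: "prefix_set w UNIV \<in> sets AInf"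
  using S_inf_sets unfolding S_inf_def by auto

lemma app_app[simp]: "app u (app v x) = app (u @ v) x"
  by (cases x) auto

lemma app_Nil[simp]: "app [] x = x"
  by (cases x) auto

lemma inj_app: "inj (app w)"
proof (rule injI)
  fix x y assume "app w x = app w y" then show "x = y"
    by (cases x; cases y) auto
qed

lemma prefix_set_Cons: "prefix_set [a] (prefix_set w S) = prefix_set (a # w) S"
  unfolding prefix_set_def image_image by simp

lemma prefix_set_FinW: "prefix_set [a] {FinW w} = {FinW (a # w)}"
  unfolding prefix_set_def by simp

lemma prefix_set_Nil: "prefix_set [] S = S"
  unfolding prefix_set_def by simp

lemma mem_prefix_set: "x \<in> prefix_set w UNIV \<longleftrightarrow>
  (case x of FinW v \<Rightarrow> prefix w v | InfW s \<Rightarrow> stake (length w) s = w)"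
proof (cases x)
  case (FinW v)
  have "FinW v \<in> range (app w) \<longleftrightarrow> prefix w v"
  proof
    assume "FinW v \<in> range (app w)"
    then obtain y where "FinW v = app w y" by auto
    then show "prefix w v" by (cases y) auto
  next
    assume "prefix w v" then obtain u where "v = w @ u" by (auto simp: prefix_def)
    then have "FinW v = app w (FinW u)" by simp
    then show "FinW v \<in> range (app w)" by blast
  qed
  then show ?thesis using FinW by (simp add: prefix_set_def)
next
  case (InfW s)
  have "InfW s \<in> range (app w) \<longleftrightarrow> stake (length w) s = w"
  proof
    assume "InfW s \<in> range (app w)"
    then obtain y where "InfW s = app w y" by auto
    then show "stake (length w) s = w" by (cases y) (auto simp: stake_shift)
  next
    assume h: "stake (length w) s = w"
    have "InfW s = app w (InfW (sdrop (length w) s))"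
      using stake_sdrop[of "length w" s] h by simp
    then show "InfW s \<in> range (app w)" by blast
  qed
  then show ?thesis using InfW by (simp add: prefix_set_def)
qed

lemma prefix_set_mono: "prefix u v \<Longrightarrow> prefix_set v UNIV \<subseteq> prefix_set u UNIV"
  unfolding prefix_def prefix_set_def by (auto simp flip: app_app)

lemma prefix_set_comparable:
  assumes "x \<in> prefix_set u UNIV" "x \<in> prefix_set v UNIV"
  shows "prefix u v \<or> prefix v u"
proof (cases x)
  case (FinW w) then show ?thesis using assms prefix_same_cases[of u w v] by (auto simp: mem_prefix_set)
next
  case (InfW s)
  then have "stake (length u) s = u" "stake (length v) s = v" using assms by (auto simp: mem_prefix_set)
  then show ?thesis
    by (metis nat_le_linear take_is_prefix take_stake min_def)
qed

lemma Int_stable_S_inf: "Int_stable S_inf"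
proof (rule Int_stableI)
  fix A B :: "'a infword set" assume A: "A \<in> S_inf" and B: "B \<in> S_inf"
  have c1: "prefix_set u UNIV \<inter> prefix_set v UNIV \<in> S_inf" for u v :: "'a list"
  proof -
    have "prefix_set u UNIV \<inter> prefix_set v UNIV = prefix_set v UNIV" if "prefix u v"
      using prefix_set_mono[OF that] by blast
    moreover have "prefix_set u UNIV \<inter> prefix_set v UNIV = prefix_set u UNIV" if "prefix v u"
      using prefix_set_mono[OF that] by blast
    moreover have "prefix_set u UNIV \<inter> prefix_set v UNIV = {}" if "\<not> prefix u v" "\<not> prefix v u"
      using prefix_set_comparable that by blast
    ultimately show ?thesis unfolding S_inf_def by blast
  qed
  have c2: "{FinW u} \<inter> prefix_set v UNIV \<in> S_inf" for u v :: "'a list"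
    unfolding S_inf_def by (cases "FinW u \<in> prefix_set v UNIV") auto
  have c3: "{FinW u} \<inter> {FinW v} \<in> S_inf" for u v :: "'a list"
    unfolding S_inf_def by (cases "u = v") auto
  from A B c1 c2 c3 show "A \<inter> B \<in> S_inf"
    unfolding S_inf_def by (auto simp: Int_commute)
qed


locale nest =
  fixes p q :: "'a::finite list \<Rightarrow> real" and g :: "'a \<Rightarrow> nat"
  assumes g_bij: "bij_betw g UNIV {0..<CARD('a)}"
    and q_nn: "\<And>w. 0 \<le> q w" and p_nn: "\<And>w. 0 \<le> p w"
    and p_eq: "\<And>w. p w = q w + (\<Sum>a\<in>UNIV. p (w @ [a]))"
begin

definition h where "h = inv_into UNIV g"

lemma hg[simp]: "h (g a) = a"
  unfolding h_def using g_bij by (simp add: bij_betw_def inv_into_f_f)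

lemma g_lt: "g a < CARD('a)"
  using g_bij by (auto simp: bij_betw_def)

lemma h_bij: "bij_betw h {0..<CARD('a)} UNIV"
  unfolding h_def using g_bij by (rule bij_betw_inv_into)

definition C :: "'a list \<Rightarrow> nat \<Rightarrow> real" where "C w k = (\<Sum>i<k. p (w @ [h i]))"

lemma C_Suc: "C w (Suc k) = C w k + p (w @ [h k])"
  unfolding C_def by simp

lemma C_N: "C w CARD('a) = p w - q w"
proof -
  have "C w CARD('a) = (\<Sum>i\<in>{0..<CARD('a)}. p (w @ [h i]))"
    unfolding C_def by (simp add: lessThan_atLeast0)
  also have "\<dots> = (\<Sum>a\<in>UNIV. p (w @ [a]))"
    using sum.reindex_bij_betw[OF h_bij, of "\<lambda>a. p (w @ [a])"] by simp
  finally show ?thesis using p_eq[of w] by simp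
qed

lemma C_mono: "k \<le> m \<Longrightarrow> C w k \<le> C w m"
  unfolding C_def by (rule sum_mono2) (auto simp: p_nn)

lemma C_nn: "0 \<le> C w k"
  unfolding C_def by (rule sum_nonneg) (auto simp: p_nn)

fun lo' :: "'a list \<Rightarrow> real" where
  "lo' [] = 0"
| "lo' (a # rw) = lo' rw + q (rev rw) + C (rev rw) (g a)"

definition lo where "lo w = lo' (rev w)"

lemma lo_Nil[simp]: "lo [] = 0" by (simp add: lo_def)
lemma lo_snoc[simp]: "lo (w @ [a]) = lo w + q w + C w (g a)" by (simp add: lo_def)

definition I where "I w = {lo w ..< lo w + p w}"
definition J where "J w = {lo w ..< lo w + q w}"

lemma I_Nil: "I [] = {0..<p []}" by (simp add: I_def)

lemma q_le_p: "q w \<le> p w"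
  using p_eq[of w] by (metis C_N C_nn diff_ge_0_iff_ge)

lemma J_sub: "J w \<subseteq> I w"
  unfolding I_def J_def using q_le_p[of w] by auto

lemma child_sub: "I (w @ [a]) \<subseteq> I w"
proof -
  have "C w (Suc (g a)) \<le> C w CARD('a)" using g_lt[of a] by (intro C_mono) simp
  then have "C w (g a) + p (w @ [a]) \<le> p w - q w" using C_Suc[of w "g a"] C_N[of w] by simp
  then show ?thesis unfolding I_def using C_nn[of w "g a"] q_nn[of w] by auto
qed

lemma J_child_disj: "J w \<inter> I (w @ [a]) = {}"
  unfolding I_def J_def using C_nn[of w "g a"] by auto

lemma child_disj_aux: "g a < g b \<Longrightarrow> I (w @ [a]) \<inter> I (w @ [b]) = {}"
proof -
  assume "g a < g b"
  then have "C w (Suc (g a)) \<le> C w (g b)" by (intro C_mono) simp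
  then have "C w (g a) + p (w @ [a]) \<le> C w (g b)" using C_Suc[of w "g a"] by simp
  then show ?thesis unfolding I_def by auto
qed

lemma child_disj: "a \<noteq> b \<Longrightarrow> I (w @ [a]) \<inter> I (w @ [b]) = {}"
proof -
  assume "a \<noteq> b"
  then have "g a \<noteq> g b" by (metis hg)
  then show ?thesis using child_disj_aux[of a b w] child_disj_aux[of b a w] by (cases "g a < g b") auto
qed

lemma child_ex:
  assumes r: "r \<in> I w" "r \<notin> J w"
  shows "\<exists>a. r \<in> I (w @ [a])"
proof (rule ccontr)
  assume "\<not> ?thesis"
  then have na: "\<And>a. r \<notin> I (w @ [a])" by blast
  have "k \<le> CARD('a) \<Longrightarrow> lo w + q w + C w k \<le> r" for k
  proof (induction k)
    case 0 then show ?case using r by (auto simp: I_def J_def C_def)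
  next
    case (Suc k)
    then have k: "k < CARD('a)" by simp
    have "g (h k) = k" unfolding h_def using g_bij k by (simp add: bij_betw_def f_inv_into_f)
    then have "lo (w @ [h k]) = lo w + q w + C w k" by simp
    moreover have "lo w + q w + C w k \<le> r" using Suc k by simp
    ultimately have "lo w + q w + C w k + p (w @ [h k]) \<le> r" using na[of "h k"] unfolding I_def by auto
    then show ?case by (simp add: C_Suc)
  qed
  from this[of "CARD('a)"] have "lo w + p w \<le> r" by (simp add: C_N)
  then show False using r by (auto simp: I_def)
qed

lemma prefix_I: "prefix u v \<Longrightarrow> I v \<subseteq> I u"
proof (induction v rule: rev_induct)
  case Nil then show ?case by simp
next
  case (snoc a v)
  then show ?case using child_sub[of v a] by (auto simp: prefix_snoc)
qed

definition nxt :: "real \<Rightarrow> 'a list \<Rightarrow> 'a option" where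
  "nxt r w = (if r \<in> J w then None else Some (SOME a. r \<in> I (w @ [a])))"

fun pth :: "real \<Rightarrow> nat \<Rightarrow> 'a list" where
  "pth r 0 = []"
| "pth r (Suc n) = (case nxt r (pth r n) of None \<Rightarrow> pth r n | Some a \<Rightarrow> pth r n @ [a])"

definition stp where "stp r n \<longleftrightarrow> nxt r (pth r n) = None"

definition word :: "real \<Rightarrow> 'a infword" where
  "word r = (if \<exists>n. stp r n then FinW (pth r (LEAST n. stp r n))
             else InfW (to_stream (\<lambda>n. pth r (Suc n) ! n)))"

lemma pth_inv: "r \<in> I [] \<Longrightarrow> r \<in> I (pth r n)"
proof (induction n)
  case 0 then show ?case by simp
next
  case (Suc n)
  show ?case
  proof (cases "nxt r (pth r n)")
    case None then show ?thesis using Suc by simp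
  next
    case (Some a)
    then have "r \<notin> J (pth r n)" "a = (SOME a. r \<in> I (pth r n @ [a]))"
      by (auto simp: nxt_def split: if_splits)
    then have "r \<in> I (pth r n @ [a])" using child_ex[of r "pth r n"] Suc someI_ex by metis
    then show ?thesis using Some by simp
  qed
qed

lemma pth_I: "r \<in> I w \<Longrightarrow> pth r (length w) = w \<and> (\<forall>m<length w. \<not> stp r m)"
proof (induction w rule: rev_induct)
  case Nil then show ?case by simp
next
  case (snoc a w)
  have rw: "r \<in> I w" using snoc.prems child_sub by blast
  with snoc.IH have ih: "pth r (length w) = w" "\<forall>m<length w. \<not> stp r m" by auto
  have nJ: "r \<notin> J w" using J_child_disj[of w a] snoc.prems by blast
  have "(SOME b. r \<in> I (w @ [b])) = a"
    using snoc.prems child_disj[of _ a w] by (intro some_equality) auto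
  then have nx: "nxt r w = Some a" using nJ by (simp add: nxt_def)
  then have "pth r (Suc (length w)) = w @ [a]" using ih by simp
  moreover have "\<not> stp r (length w)" using nx ih by (simp add: stp_def)
  ultimately show ?case using ih by (auto simp: less_Suc_eq)
qed

lemma pth_len: "(\<forall>m<n. \<not> stp r m) \<Longrightarrow> length (pth r n) = n"
proof (induction n)
  case 0 then show ?case by simp
next
  case (Suc n)
  then obtain a where "nxt r (pth r n) = Some a" by (auto simp: stp_def)
  then show ?case using Suc by simp
qed

lemma pth_step_prefix: "prefix (pth r n) (pth r (Suc n))"
  by (cases "nxt r (pth r n)") auto

lemma pth_prefix: "m \<le> n \<Longrightarrow> prefix (pth r m) (pth r n)"
proof (induction n)
  case 0 then show ?case by simp
next
  case (Suc n)
  then show ?case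
    by (metis le_Suc_eq prefix_order.order_refl prefix_order.order_trans pth_step_prefix)
qed

lemma stake_pth:
  assumes "\<forall>n. \<not> stp r n"
  shows "stake n (to_stream (\<lambda>n. pth r (Suc n) ! n)) = pth r n"
proof (induction n)
  case 0 then show ?case by simp
next
  case (Suc n)
  obtain a where a: "nxt r (pth r n) = Some a" using assms by (auto simp: stp_def)
  have len: "length (pth r n) = n" using assms pth_len by blast
  have eq: "pth r (Suc n) = pth r n @ [a]" using a by simp
  have "pth r (Suc n) ! n = a" using eq len by (metis nth_append_length)
  then have sn: "to_stream (\<lambda>n. pth r (Suc n) ! n) !! n = a"
    by (simp add: to_stream_def del: pth.simps)
  show ?case unfolding stake_Suc Suc.IH sn eq by simp
qed

lemma word_prefix:
  assumes r: "r \<in> I []"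
  shows "word r \<in> prefix_set w UNIV \<longleftrightarrow> r \<in> I w"
proof
  assume wp: "word r \<in> prefix_set w UNIV"
  show "r \<in> I w"
  proof (cases "\<exists>n. stp r n")
    case True
    then have "prefix w (pth r (LEAST n. stp r n))" using wp by (simp add: word_def mem_prefix_set)
    then show ?thesis using prefix_I pth_inv[OF r] by blast
  next
    case False
    then have "stake (length w) (to_stream (\<lambda>n. pth r (Suc n) ! n)) = w"
      using wp by (simp add: word_def mem_prefix_set)
    then have "pth r (length w) = w" using stake_pth False by auto
    then show ?thesis using pth_inv[OF r, of "length w"] by simp
  qed
next
  assume rI: "r \<in> I w"
  then have pw: "pth r (length w) = w" and ns: "\<forall>m<length w. \<not> stp r m" using pth_I by auto
  show "word r \<in> prefix_set w UNIV"
  proof (cases "\<exists>n. stp r n")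
    case True
    then have st: "stp r (LEAST n. stp r n)" by (rule LeastI_ex)
    then have "length w \<le> (LEAST n. stp r n)" using ns by (meson not_le)
    then have "prefix w (pth r (LEAST n. stp r n))" using pth_prefix pw by metis
    then show ?thesis using True by (simp add: word_def mem_prefix_set)
  next
    case False
    then show ?thesis using stake_pth[OF _] pw by (simp add: word_def mem_prefix_set)
  qed
qed

lemma word_FinW:
  assumes r: "r \<in> I []"
  shows "word r = FinW w \<longleftrightarrow> r \<in> J w"
proof
  assume wf: "word r = FinW w"
  then have ex: "\<exists>n. stp r n" by (auto simp: word_def split: if_splits)
  then have "w = pth r (LEAST n. stp r n)" using wf by (simp add: word_def)
  moreover have "stp r (LEAST n. stp r n)" using ex by (rule LeastI_ex)
  ultimately show "r \<in> J w" by (auto simp: stp_def nxt_def split: if_splits)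
next
  assume rJ: "r \<in> J w"
  then have "r \<in> I w" using J_sub by blast
  then have pw: "pth r (length w) = w" and ns: "\<forall>m<length w. \<not> stp r m" using pth_I by auto
  have st: "stp r (length w)" using pw rJ by (simp add: stp_def nxt_def)
  have "(LEAST n. stp r n) = length w"
    using st ns by (intro Least_equality) (auto simp: not_less[symmetric])
  then show "word r = FinW w" using st pw by (auto simp: word_def)
qed

definition M0 where "M0 = restrict_space lborel {0..<p []}"
definition meas where "meas = distr M0 AInf word"

lemma space_M0: "space M0 = I []" by (simp add: M0_def I_Nil)

lemma sets_M0_iff: "A \<in> sets M0 \<longleftrightarrow> A \<subseteq> I [] \<and> A \<in> sets lborel"
  unfolding M0_def I_Nil by (rule sets_restrict_space_iff) simp

lemma I_sub: "I w \<subseteq> I []" using prefix_I[of "[]" w] by simp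

lemma pre_prefix: "word -` prefix_set w UNIV \<inter> space M0 = I w"
  using word_prefix I_sub unfolding space_M0 by blast

lemma pre_FinW: "word -` {FinW w} \<inter> space M0 = J w"
  using word_FinW I_sub J_sub unfolding space_M0 by blast

lemma word_meas: "word \<in> measurable M0 AInf"
  unfolding AInf_def
proof (rule measurable_measure_of)
  fix y :: "'a infword set" assume "y \<in> S_inf"
  then consider "y = {}" | w where "y = {FinW w}" | w where "y = prefix_set w UNIV"
    unfolding S_inf_def by auto
  then show "word -` y \<inter> space M0 \<in> sets M0"
  proof cases
    case 2
    have "J w \<subseteq> I []" using J_sub I_sub by blast
    moreover have "J w \<in> sets lborel" by (simp add: J_def)
    ultimately show ?thesis using 2 pre_FinW by (simp add: sets_M0_iff)
  next
    case 3
    have "I w \<subseteq> I []" using I_sub by blast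
    moreover have "I w \<in> sets lborel" by (simp add: I_def)
    ultimately show ?thesis using 3 pre_prefix by (simp add: sets_M0_iff)
  qed simp
qed auto

lemma meas_prefix: "emeasure meas (prefix_set w UNIV) = ennreal (p w)"
proof -
  have "emeasure meas (prefix_set w UNIV) = emeasure M0 (I w)"
    unfolding meas_def by (simp add: emeasure_distr[OF word_meas] pre_prefix)
  also have "\<dots> = emeasure lborel (I w)"
    unfolding M0_def using I_sub by (intro emeasure_restrict_space) (auto simp: I_Nil)
  also have "\<dots> = ennreal (p w)" using p_nn[of w] by (simp add: I_def)
  finally show ?thesis .
qed

lemma meas_FinW: "emeasure meas {FinW w} = ennreal (q w)"
proof -
  have "emeasure meas {FinW w} = emeasure M0 (J w)"
    unfolding meas_def by (simp add: emeasure_distr[OF word_meas] pre_FinW)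
  also have "\<dots> = emeasure lborel (J w)"
    unfolding M0_def using I_sub J_sub by (intro emeasure_restrict_space) (auto simp: I_Nil)
  also have "\<dots> = ennreal (q w)" using q_nn[of w] by (simp add: J_def)
  finally show ?thesis .
qed

lemma sets_meas: "sets meas = sets AInf" by (simp add: meas_def)

lemma subprob_meas: "p [] \<le> 1 \<Longrightarrow> subprob_space meas"
proof
  assume "p [] \<le> 1"
  have "space meas = prefix_set [] UNIV" by (simp add: meas_def prefix_set_Nil)
  then show "emeasure meas (space meas) \<le> 1" using meas_prefix[of "[]"] \<open>p [] \<le> 1\<close> by simp
  show "space meas \<noteq> {}" by (simp add: meas_def)
qed

end



lemma UNIV_sets[measurable]: "UNIV \<in> sets AInf"
  using sets.top[of AInf] by simp

lemma deriv_lemma: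
  fixes \<mu> \<nu> :: "'a infword measure"
  assumes sm: "sets \<mu> = sets AInf" and sn: "sets \<nu> = sets AInf"
    and fm: "finite_measure \<mu>" and fn: "finite_measure \<nu>"
    and hp: "\<And>w. emeasure \<nu> (prefix_set w UNIV) = emeasure \<mu> (prefix_set (a # w) UNIV)"
    and hf: "\<And>w. emeasure \<nu> {FinW w} = emeasure \<mu> {FinW (a # w)}"
    and S: "S \<in> sets AInf"
  shows "prefix_set [a] S \<in> sets AInf \<and> emeasure \<nu> S = emeasure \<mu> (prefix_set [a] S)"
proof -
  have S': "S \<in> sigma_sets UNIV S_inf" using S by (simp add: sets_AInf)
  have cl: "S_inf \<subseteq> Pow UNIV" by simp
  show ?thesis using Int_stable_S_inf cl S'
  proof (induction rule: sigma_sets_induct_disjoint)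
    case (basic A)
    then consider "A = {}" | w where "A = {FinW w}" | w where "A = prefix_set w UNIV"
      unfolding S_inf_def by auto
    then show ?case
    proof cases
      case 1 then show ?thesis by (simp add: prefix_set_def)
    next
      case 2 then show ?thesis using hf by (simp add: prefix_set_FinW)
    next
      case 3 then show ?thesis using hp by (simp add: prefix_set_Cons)
    qed
  next
    case empty then show ?case by (simp add: prefix_set_def)
  next
    case (compl A)
    have AS: "A \<in> sets AInf" using compl.hyps by (simp add: sets_AInf)
    have eq: "prefix_set [a] (UNIV - A) = prefix_set [a] UNIV - prefix_set [a] A"
      unfolding prefix_set_def using inj_app[of "[a]"] by (simp add: image_set_diff)
    have sub: "prefix_set [a] A \<subseteq> prefix_set [a] UNIV" by (auto simp: prefix_set_def)
    have "emeasure \<nu> (UNIV - A) = emeasure \<nu> UNIV - emeasure \<nu> A"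
      using AS sn finite_measure.emeasure_finite[OF fn] UNIV_sets by (intro emeasure_Diff) auto
    also have "emeasure \<nu> UNIV = emeasure \<mu> (prefix_set [a] UNIV)"
      using hp[of "[]"] by (simp add: prefix_set_Nil)
    also have "emeasure \<mu> (prefix_set [a] UNIV) - emeasure \<nu> A
       = emeasure \<mu> (prefix_set [a] UNIV) - emeasure \<mu> (prefix_set [a] A)"
      using compl.IH by simp
    also have "\<dots> = emeasure \<mu> (prefix_set [a] UNIV - prefix_set [a] A)"
      using compl.IH sm sub finite_measure.emeasure_finite[OF fm] prefix_set_sets[of "[a]"]
      by (intro emeasure_Diff[symmetric]) auto
    finally show ?case using compl.IH eq by auto
  next
    case (union A)
    have eq: "prefix_set [a] (\<Union>i. A i) = (\<Union>i. prefix_set [a] (A i))"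
      unfolding prefix_set_def by auto
    have dj: "disjoint_family (\<lambda>i. prefix_set [a] (A i))"
      using union.hyps(1) inj_app[of "[a]"] unfolding disjoint_family_on_def prefix_set_def
      by (auto simp flip: image_Int)
    have AS: "range A \<subseteq> sets AInf" using union.hyps(2) by (simp add: sets_AInf)
    have "emeasure \<nu> (\<Union>i. A i) = (\<Sum>i. emeasure \<nu> (A i))"
      using AS sn union.hyps(1) by (intro suminf_emeasure[symmetric]) auto
    also have "\<dots> = (\<Sum>i. emeasure \<mu> (prefix_set [a] (A i)))" using union.IH by simp
    also have "\<dots> = emeasure \<mu> (\<Union>i. prefix_set [a] (A i))"
      using union.IH sm dj by (intro suminf_emeasure) auto
    finally show ?case using eq union.IH by auto
  qed
qed

lemma unique_lemma:
  fixes \<mu> \<nu> :: "'a infword measure"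
  assumes sm: "sets \<mu> = sets AInf" and sn: "sets \<nu> = sets AInf"
    and fm: "finite_measure \<mu>"
    and eq: "\<And>X. X \<in> S_inf \<Longrightarrow> emeasure \<mu> X = emeasure \<nu> X"
  shows "\<mu> = \<nu>"
proof (rule measure_eqI_generator_eq[OF Int_stable_S_inf _ eq, where A="\<lambda>_. UNIV" and \<Omega>=UNIV])
  show "range (\<lambda>_. UNIV) \<subseteq> S_inf" unfolding S_inf_def using prefix_set_Nil[of UNIV] by blast
  show "sets \<mu> = sigma_sets UNIV S_inf" using sm by (simp add: sets_AInf)
  show "sets \<nu> = sigma_sets UNIV S_inf" using sn by (simp add: sets_AInf)
  show "(\<Union>i::nat. UNIV) = (UNIV :: 'a infword set)" by simp
  show "\<And>i::nat. emeasure \<mu> UNIV \<noteq> \<infinity>" using finite_measure.emeasure_finite[OF fm] by simp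
qed simp

fun tw :: "('a \<Rightarrow> 'y \<Rightarrow> 'y) \<Rightarrow> 'a list \<Rightarrow> 'y \<Rightarrow> 'y" where
  "tw tau [] y = y"
| "tw tau (a # w) y = tw tau w (tau a y)"

lemma tw_snoc: "tw tau (w @ [a]) y = tau a (tw tau w y)"
  by (induction w arbitrary: y) auto

lemma tw_meas: "(\<And>a. tau a \<in> measurable Y Y) \<Longrightarrow> tw tau w \<in> measurable Y Y"
proof (induction w)
  case Nil then show ?case by (simp add: measurable_ident_sets[of Y Y, simplified] id_def)
next
  case (Cons a w)
  have "tw tau (a # w) = tw tau w \<circ> tau a" by (rule ext) simp
  then show ?case using Cons measurable_comp by metis
qed

lemma tw_space: "(\<And>a. tau a \<in> measurable Y Y) \<Longrightarrow> y \<in> space Y \<Longrightarrow> tw tau w y \<in> space Y"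
  using tw_meas measurable_space by metis

lemma unitI_val: "f \<in> measurable Y unitI \<Longrightarrow> y \<in> space Y \<Longrightarrow> 0 \<le> f y \<and> f y \<le> 1"
  using measurable_space[of f Y unitI y] by (simp add: unitI_def space_restrict_space)

lemma unitI_borel: "f \<in> measurable Y unitI \<Longrightarrow> f \<in> borel_measurable Y"
  by (simp add: unitI_def measurable_restrict_space2_iff)

lemma subprob_finite: "subprob_space M \<Longrightarrow> finite_measure M"
  by (simp add: subprob_space_def)

lemma morph_vals:
  assumes m: "coalg_morphism Y b1 bs tau f" and tm: "\<And>a. tau a \<in> measurable Y Y"
    and y: "y \<in> space Y"
  shows "emeasure (f y) (prefix_set w UNIV) = ennreal (b1 (tw tau w y)) \<and>
         emeasure (f y) {FinW w} = ennreal (bs (tw tau w y))"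
  using y
proof (induction w arbitrary: y)
  case Nil then show ?case using m by (simp add: coalg_morphism_def prefix_set_Nil eps_def)
next
  case (Cons a w)
  have ty: "tau a y \<in> space Y" using tm Cons.prems measurable_space by metis
  have D: "\<And>S. S \<in> sets AInf \<Longrightarrow> emeasure (f (tau a y)) S = emeasure (f y) (prefix_set [a] S)"
    using m Cons.prems unfolding coalg_morphism_def by blast
  have "emeasure (f y) (prefix_set (a # w) UNIV) = emeasure (f (tau a y)) (prefix_set w UNIV)"
    using D[OF prefix_set_sets[of w]] by (simp only: prefix_set_Cons)
  moreover have "emeasure (f y) {FinW (a # w)} = emeasure (f (tau a y)) {FinW w}"
    using D[OF FinW_sets[of w]] by (simp only: prefix_set_FinW)
  ultimately show ?case using Cons.IH[OF ty] by simp
qed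

lemma morph_sub:
  assumes m: "coalg_morphism Y b1 bs tau f" and y: "y \<in> space Y"
  shows "subprob_space (f y) \<and> sets (f y) = sets AInf"
  using measurable_space[of f Y "subprob_algebra AInf" y] m y
  by (simp add: coalg_morphism_def space_subprob_algebra)


definition Fm where
  "Fm b1 bs tau g y = nest.meas (\<lambda>w. b1 (tw tau w y)) (\<lambda>w. bs (tw tau w y)) g"

lemma constr:
  fixes Y :: "'y measure" and b1 bs :: "'y \<Rightarrow> real" and tau :: "'a::finite \<Rightarrow> 'y \<Rightarrow> 'y"
  assumes b1m: "b1 \<in> measurable Y unitI" and bsm: "bs \<in> measurable Y unitI"
    and tm: "\<And>a. tau a \<in> measurable Y Y"
    and ii: "\<forall>y\<in>space Y. b1 y = bs y + (\<Sum>a\<in>UNIV. b1 (tau a y))"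
    and g: "bij_betw g UNIV {0..<CARD('a)}"
    and y: "y \<in> space Y"
  shows "subprob_space (Fm b1 bs tau g y) \<and> sets (Fm b1 bs tau g y) = sets AInf \<and>
         (\<forall>w. emeasure (Fm b1 bs tau g y) (prefix_set w UNIV) = ennreal (b1 (tw tau w y)) \<and>
              emeasure (Fm b1 bs tau g y) {FinW w} = ennreal (bs (tw tau w y)))"
proof -
  have sp: "tw tau w y \<in> space Y" for w using tw_space[OF tm y] .
  interpret nest "\<lambda>w. b1 (tw tau w y)" "\<lambda>w. bs (tw tau w y)" g
  proof
    show "bij_betw g UNIV {0..<CARD('a)}" by fact
    show "0 \<le> bs (tw tau w y)" for w using unitI_val[OF bsm sp] by simp
    show "0 \<le> b1 (tw tau w y)" for w using unitI_val[OF b1m sp] by simp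
    show "b1 (tw tau w y) = bs (tw tau w y) + (\<Sum>a\<in>UNIV. b1 (tw tau (w @ [a]) y))" for w
      using ii sp[of w] by (simp add: tw_snoc)
  qed
  have "b1 (tw tau [] y) \<le> 1" using unitI_val[OF b1m y] by simp
  then show ?thesis unfolding Fm_def using subprob_meas sets_meas meas_prefix meas_FinW by simp
qed

theorem mainTheorem10:
  fixes Y :: "'y measure"
    and b1 bs :: "'y \<Rightarrow> real"
    and tau :: "'a::finite \<Rightarrow> 'y \<Rightarrow> 'y"
  assumes "b1 \<in> measurable Y unitI"
    and "bs \<in> measurable Y unitI"
    and "\<And>a. tau a \<in> measurable Y Y"
  shows "((\<exists>f. coalg_morphism Y b1 bs tau f) \<longleftrightarrow>
           (\<forall>y\<in>space Y. b1 y = bs y + (\<Sum>a\<in>UNIV. b1 (tau a y))))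
         \<and> (\<forall>f g. coalg_morphism Y b1 bs tau f \<and> coalg_morphism Y b1 bs tau g
                  \<longrightarrow> (\<forall>y\<in>space Y. f y = g y))"
proof (intro conjI iffI allI impI ballI)
  note b1m = assms(1) and bsm = assms(2) and tm = assms(3)
  show "f y = g y" if "coalg_morphism Y b1 bs tau f \<and> coalg_morphism Y b1 bs tau g" "y \<in> space Y" for f g y
  proof -
    have mf: "coalg_morphism Y b1 bs tau f" and mg: "coalg_morphism Y b1 bs tau g" using that by auto
    show ?thesis
    proof (rule unique_lemma)
      show "sets (f y) = sets AInf" "sets (g y) = sets AInf" "finite_measure (f y)"
        using morph_sub[OF mf that(2)] morph_sub[OF mg that(2)] subprob_finite by auto
      fix X :: "'a infword set" assume "X \<in> S_inf"
      then consider "X = {}" | w where "X = {FinW w}" | w where "X = prefix_set w UNIV"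
        unfolding S_inf_def by auto
      then show "emeasure (f y) X = emeasure (g y) X"
        using morph_vals[OF mf tm that(2)] morph_vals[OF mg tm that(2)] by cases auto
    qed
  qed
next
  note b1m = assms(1) and bsm = assms(2) and tm = assms(3)
  fix y assume "\<exists>f. coalg_morphism Y b1 bs tau f" and y: "y \<in> space Y"
  then obtain f where m: "coalg_morphism Y b1 bs tau f" by blast
  have sf: "sets (f y) = sets AInf" using morph_sub[OF m y] by simp
  have cover: "(UNIV :: 'a infword set) = {eps} \<union> (\<Union>a\<in>UNIV. prefix_set [a] UNIV)"
  proof (intro set_eqI iffI)
    fix x :: "'a infword"
    show "x \<in> {eps} \<union> (\<Union>a\<in>UNIV. prefix_set [a] UNIV)"
    proof (cases x)
      case (FinW v) then show ?thesis
        by (cases v) (auto simp: eps_def mem_prefix_set)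
    next
      case (InfW s)
      then have "x \<in> prefix_set [shd s] UNIV" by (simp add: mem_prefix_set)
      then show ?thesis by blast
    qed
  qed simp
  have dj: "disjoint_family_on (\<lambda>a. prefix_set [a] UNIV) UNIV"
    unfolding disjoint_family_on_def by (auto simp: mem_prefix_set prefix_def split: infword.splits)
  have de: "{eps} \<inter> (\<Union>a\<in>UNIV. prefix_set [a] UNIV) = {}"
    by (auto simp: mem_prefix_set eps_def)
  have D: "\<And>a S. S \<in> sets AInf \<Longrightarrow> emeasure (f (tau a y)) S = emeasure (f y) (prefix_set [a] S)"
    using m y unfolding coalg_morphism_def by blast
  have ty: "tau a y \<in> space Y" for a using tm y measurable_space by metis
  have "ennreal (b1 y) = emeasure (f y) UNIV" using m y by (simp add: coalg_morphism_def)
  also have "\<dots> = emeasure (f y) {eps} + emeasure (f y) (\<Union>a\<in>UNIV. prefix_set [a] UNIV)"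
    by (subst cover, rule plus_emeasure[symmetric]) (auto simp: sf eps_def de mem_prefix_set)
  also have "emeasure (f y) (\<Union>a\<in>UNIV. prefix_set [a] UNIV) = (\<Sum>a\<in>UNIV. emeasure (f y) (prefix_set [a] UNIV))"
    by (rule sum_emeasure[symmetric]) (auto simp: sf dj)
  also have "\<dots> = (\<Sum>a\<in>UNIV. ennreal (b1 (tau a y)))"
  proof (rule sum.cong)
    fix a :: 'a
    have "emeasure (f y) (prefix_set [a] UNIV) = emeasure (f (tau a y)) UNIV" using D[OF UNIV_sets] by simp
    also have "\<dots> = ennreal (b1 (tau a y))" using m ty[of a] by (simp add: coalg_morphism_def)
    finally show "emeasure (f y) (prefix_set [a] UNIV) = ennreal (b1 (tau a y))" .
  qed simp
  also have "emeasure (f y) {eps} = ennreal (bs y)" using m y by (simp add: coalg_morphism_def)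
  finally have "ennreal (b1 y) = ennreal (bs y) + (\<Sum>a\<in>UNIV. ennreal (b1 (tau a y)))" .
  also have "\<dots> = ennreal (bs y + (\<Sum>a\<in>UNIV. b1 (tau a y)))"
    using unitI_val[OF bsm y] unitI_val[OF b1m ty]
    by (simp add: ennreal_plus sum_nonneg)
  finally show "b1 y = bs y + (\<Sum>a\<in>UNIV. b1 (tau a y))"
    using unitI_val[OF bsm y] unitI_val[OF b1m ty] unitI_val[OF b1m y]
    by (subst (asm) ennreal_inj) (auto intro!: add_nonneg_nonneg sum_nonneg)
next
  note b1m = assms(1) and bsm = assms(2) and tm = assms(3)
  assume ii: "\<forall>y\<in>space Y. b1 y = bs y + (\<Sum>a\<in>UNIV. b1 (tau a y))"
  obtain g :: "'a \<Rightarrow> nat" where g: "bij_betw g UNIV {0..<CARD('a)}"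
    using ex_bij_betw_finite_nat[of "UNIV :: 'a set"] by auto
  note C = constr[OF b1m bsm tm ii g]
  let ?F = "Fm b1 bs tau g"
  have meas: "?F \<in> measurable Y (subprob_algebra AInf)"
  proof (rule measurable_subprob_algebra_generated[OF sets_AInf Int_stable_S_inf])
    show "S_inf \<subseteq> Pow UNIV" by simp
    show "\<And>y. y \<in> space Y \<Longrightarrow> subprob_space (?F y)" "\<And>y. y \<in> space Y \<Longrightarrow> sets (?F y) = sets AInf"
      using C by auto
    have bm: "(\<lambda>y. ennreal (h (tw tau w y))) \<in> borel_measurable Y"
      if "h \<in> measurable Y unitI" for h :: "'y \<Rightarrow> real" and w
    proof -
      have "(\<lambda>y. h (tw tau w y)) \<in> borel_measurable Y"
        using measurable_comp[OF tw_meas[OF tm, where w=w] unitI_borel[OF that]] by (simp add: comp_def)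
      then show ?thesis by (rule measurable_compose) measurable
    qed
    have pm: "(\<lambda>y. emeasure (?F y) (prefix_set w UNIV)) \<in> borel_measurable Y" for w
      using bm[OF b1m] by (rule measurable_cong[THEN iffD1, rotated]) (use C in auto)
    have fm: "(\<lambda>y. emeasure (?F y) {FinW w}) \<in> borel_measurable Y" for w
      using bm[OF bsm] by (rule measurable_cong[THEN iffD1, rotated]) (use C in auto)
    show "(\<lambda>y. emeasure (?F y) A) \<in> borel_measurable Y" if "A \<in> S_inf" for A
    proof -
      from that consider "A = {}" | w where "A = {FinW w}" | w where "A = prefix_set w UNIV"
        unfolding S_inf_def by auto
      then show ?thesis using pm fm by cases auto
    qed
    show "(\<lambda>y. emeasure (?F y) UNIV) \<in> borel_measurable Y"
      using pm[of "[]"] by (simp add: prefix_set_Nil)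
  qed
  have "coalg_morphism Y b1 bs tau ?F"
    unfolding coalg_morphism_def
  proof (intro conjI ballI allI meas)
    fix y assume y: "y \<in> space Y"
    show "emeasure (?F y) (space AInf) = ennreal (b1 y)"
      using C[OF y] prefix_set_Nil[of UNIV] by (metis space_AInf tw.simps(1))
    show "emeasure (?F y) {eps} = ennreal (bs y)"
      using C[OF y] by (simp add: eps_def)
    fix a and S :: "'a infword set" assume S: "S \<in> sets AInf"
    have ty: "tau a y \<in> space Y" using tm y measurable_space by metis
    show "emeasure (?F (tau a y)) S = emeasure (?F y) (prefix_set [a] S)"
    proof (rule deriv_lemma[OF _ _ _ _ _ _ S, THEN conjunct2])
      show "sets (?F y) = sets AInf" "sets (?F (tau a y)) = sets AInf"
        "finite_measure (?F y)" "finite_measure (?F (tau a y))"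
        using C[OF y] C[OF ty] subprob_finite by auto
      show "emeasure (?F (tau a y)) (prefix_set w UNIV) = emeasure (?F y) (prefix_set (a # w) UNIV)" for w
        using C[OF y] C[OF ty] by simp
      show "emeasure (?F (tau a y)) {FinW w} = emeasure (?F y) {FinW (a # w)}" for w
        using C[OF y] C[OF ty] by simp
    qed
  qed
  then show "\<exists>f. coalg_morphism Y b1 bs tau f" by blast
qed

end
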